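(* Let $(m,q,d,\tau)$ be suitable parameters and let $\rho=f,X_1,\dots,X_m$ where $f:\Omega\to\mathbb F_q^{d+1}$ is a bijection, $X_1,\dots,X_m$ form a partition of $\mathbb F_q^d$ and $|X_k|=\tau_{B_k}$ for all $k$. Then for every transversal hyperplane $V$ of $\mathbb F_q^{d+1}$, $N(V,\rho)$ is a deal of distribution type $\tau$ and $(N(V,\rho),\rho)$ is an execution of the shifted projection protocol.
   Context: Agents $\mathcal A=\{A,B_1,\dots,B_m\}$ speak in order $A,B_1,\dots,B_m$. A distribution type is a vector $\tau=(\tau_P)_{P\in\mathcal A}$ of positive integers, $|\tau|=\sum_P\tau_P$; the deck $\Omega$ has $|\tau|$ cards; a deal of type $\tau$ is a partition $H=(H_P)_P$ of $\Omega$ with $|H_P|=\tau_P$. Suitable parameters: $m>1$, $q>m$ a prime power, $d>0$, $|\tau|=q^{d+1}$, $\tau_A=q^{d+1}-q^d$, $\tau_{B_k}>q^{d-1}$ for each $k$. A transversal hyperplane $V\subseteq\mathbb F_q^{d+1}$ is $\{x: x_{d+1}=a_1x_1+\dots+a_dx_d+b\}$; $\sigma(V)=(a_1,\dots,a_d)$; $\pi$ projects onto the first $d$ coordinates, $\pi|_V$ is a bijection onto $\mathbb F_q^d$ with inverse $\iota_V$; $\pi^V_\downarrow(w)=\pi(w)+\sigma(V)$ for $w\in V$ and $\pi^V_\uparrow(y)=\iota_V(y-\sigma(V))$ for $y\in\mathbb F_q^d$. $N(V,\rho)$ is defined by $N(V,\rho)_A=f^{-1}[\mathbb F_q^{d+1}\setminus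 V]$ and $N(V,\rho)_{B_k}=f^{-1}[\pi^V_\uparrow[X_k]]$ for $k\in[1,m]$. Shifted projection protocol: maximal executions for deal $H$ are $(H,f,X_1,\dots,X_m)$ with $f:\Omega\to\mathbb F_q^{d+1}$ a bijection such that $V=\mathbb F_q^{d+1}\setminus f[H_A]$ is a transversal hyperplane and $X_k=\pi^V_\downarrow[f[H_{B_k}]]$; $\Pi(H,\rho)$ is the set of tokens $a$ with $(H,\rho*a)$ an initial segment of a maximal execution; an execution is $(H,a_0,\dots,a_n)$ with $a_k\in\Pi(H,a_0,\dots,a_{k-1})$ for all $k$. *)

theory Defs
  imports Main "HOL-Computational_Algebra.Primes" "HOL-Library.Sublist"
begin

text \<open>Agents are indexed by naturals: 0 is A, k (1 \<le> k \<le> m) is B_k.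
A distribution type is tau :: nat \<Rightarrow> nat (only values at 0..m matter).
The field F_q is a finite field type 'q with CARD('q) = q.
Vectors of F_q^n are functions nat \<Rightarrow> 'q vanishing from index n on; the paper's
coordinate x_i is index i-1, so x_(d+1) is index d.\<close>

definition vecs :: "nat \<Rightarrow> (nat \<Rightarrow> 'q::field) set" where
  "vecs n = {x. \<forall>i\<ge>n. x i = 0}"

definition hyp :: "nat \<Rightarrow> (nat \<Rightarrow> 'q::field) \<Rightarrow> 'q \<Rightarrow> (nat \<Rightarrow> 'q) set" where
  "hyp d a b = {x \<in> vecs (Suc d). x d = (\<Sum>i<d. a i * x i) + b}"

definition transversal :: "nat \<Rightarrow> (nat \<Rightarrow> 'q::field) set \<Rightarrow> bool" where
  "transversal d V \<longleftrightarrow> (\<exists>a\<in>vecs d. \<exists>b. V = hyp d a b)"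

definition sigma :: "nat \<Rightarrow> (nat \<Rightarrow> 'q::field) set \<Rightarrow> (nat \<Rightarrow> 'q)" where
  "sigma d V = (THE a. a \<in> vecs d \<and> (\<exists>b. V = hyp d a b))"

definition proj :: "nat \<Rightarrow> (nat \<Rightarrow> 'q::field) \<Rightarrow> (nat \<Rightarrow> 'q)" where
  "proj d x = (\<lambda>i. if i < d then x i else 0)"

definition iota :: "nat \<Rightarrow> (nat \<Rightarrow> 'q::field) set \<Rightarrow> (nat \<Rightarrow> 'q) \<Rightarrow> (nat \<Rightarrow> 'q)" where
  "iota d V y = (THE w. w \<in> V \<and> proj d w = y)"

definition pi_down :: "nat \<Rightarrow> (nat \<Rightarrow> 'q::field) set \<Rightarrow> (nat \<Rightarrow> 'q) \<Rightarrow> (nat \<Rightarrow> 'q)" where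
  "pi_down d V w = (\<lambda>i. proj d w i + sigma d V i)"

definition pi_up :: "nat \<Rightarrow> (nat \<Rightarrow> 'q::field) set \<Rightarrow> (nat \<Rightarrow> 'q) \<Rightarrow> (nat \<Rightarrow> 'q)" where
  "pi_up d V y = iota d V (\<lambda>i. y i - sigma d V i)"

definition is_deal :: "'c set \<Rightarrow> nat \<Rightarrow> (nat \<Rightarrow> nat) \<Rightarrow> (nat \<Rightarrow> 'c set) \<Rightarrow> bool" where
  "is_deal \<Omega> m tau H \<longleftrightarrow>
     (\<forall>P\<le>m. H P \<subseteq> \<Omega> \<and> finite (H P) \<and> card (H P) = tau P) \<and>
     (\<forall>P\<le>m. \<forall>Q\<le>m. P \<noteq> Q \<longrightarrow> H P \<inter> H Q = {}) \<and>
     (\<Union>P\<in>{..m}. H P) = \<Omega>"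

definition suitable :: "nat \<Rightarrow> nat \<Rightarrow> nat \<Rightarrow> (nat \<Rightarrow> nat) \<Rightarrow> bool" where
  "suitable m q d tau \<longleftrightarrow>
     m > 1 \<and> q > m \<and> (\<exists>p k. prime (p::nat) \<and> k > 0 \<and> q = p ^ k) \<and> d > 0 \<and>
     (\<forall>P\<le>m. tau P > 0) \<and>
     (\<Sum>P\<le>m. tau P) = q ^ (Suc d) \<and>
     tau 0 = q ^ (Suc d) - q ^ d \<and>
     (\<forall>k\<in>{1..m}. tau k > q ^ (d - 1))"

datatype ('c, 'q) token = TokF "'c \<Rightarrow> nat \<Rightarrow> 'q" | TokX "(nat \<Rightarrow> 'q) set"

definition max_exec :: "'c set \<Rightarrow> nat \<Rightarrow> nat \<Rightarrow> (nat \<Rightarrow> nat) \<Rightarrow> (nat \<Rightarrow> 'c set)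
    \<Rightarrow> ('c, 'q::field) token list \<Rightarrow> bool" where
  "max_exec \<Omega> m d tau H toks \<longleftrightarrow> is_deal \<Omega> m tau H \<and>
     (\<exists>f X. toks = TokF f # map (\<lambda>k. TokX (X k)) [1..<Suc m] \<and>
        bij_betw f \<Omega> (vecs (Suc d)) \<and>
        transversal d (vecs (Suc d) - f ` H 0) \<and>
        (\<forall>k\<in>{1..m}. X k = pi_down d (vecs (Suc d) - f ` H 0) ` f ` H k))"

definition Pi_tok :: "'c set \<Rightarrow> nat \<Rightarrow> nat \<Rightarrow> (nat \<Rightarrow> nat) \<Rightarrow> (nat \<Rightarrow> 'c set)
    \<Rightarrow> ('c, 'q::field) token list \<Rightarrow> ('c, 'q) token set" where
  "Pi_tok \<Omega> m d tau H rho =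
     {a. \<exists>e. max_exec \<Omega> m d tau H e \<and> prefix (rho @ [a]) e}"

definition is_execution :: "'c set \<Rightarrow> nat \<Rightarrow> nat \<Rightarrow> (nat \<Rightarrow> nat) \<Rightarrow> (nat \<Rightarrow> 'c set)
    \<Rightarrow> ('c, 'q::field) token list \<Rightarrow> bool" where
  "is_execution \<Omega> m d tau H toks \<longleftrightarrow>
     (\<forall>k<length toks. toks ! k \<in> Pi_tok \<Omega> m d tau H (take k toks))"

definition N :: "'c set \<Rightarrow> nat \<Rightarrow> (nat \<Rightarrow> 'q::field) set \<Rightarrow> ('c \<Rightarrow> nat \<Rightarrow> 'q)
    \<Rightarrow> (nat \<Rightarrow> (nat \<Rightarrow> 'q) set) \<Rightarrow> nat \<Rightarrow> 'c set" where
  "N \<Omega> d V f X P =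
     (if P = 0 then {c \<in> \<Omega>. f c \<in> vecs (Suc d) - V}
      else {c \<in> \<Omega>. f c \<in> pi_up d V ` X P})"

end

theory Submission
  imports Defs
begin

lemma hyp_sub: "hyp d a b \<subseteq> vecs (Suc d)"
  by (auto simp: hyp_def)

lemma hyp_unique:
  fixes a a' :: "nat \<Rightarrow> 'q::field"
  assumes a: "a \<in> vecs d" and a': "a' \<in> vecs d" and eq: "hyp d a b = hyp d a' b'"
  shows "a = a'"
proof
  fix j
  have x0: "(\<lambda>i. if i = d then b else 0) \<in> hyp d a b"
    by (auto simp: hyp_def vecs_def)
  hence "(\<lambda>i. if i = d then b else 0) \<in> hyp d a' b'" using eq by simp
  hence "b = b'" by (simp add: hyp_def)
  show "a j = a' j"
  proof (cases "j < d")
    case True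
    let ?x = "\<lambda>i. if i = j then 1 else if i = d then a j + b else (0::'q)"
    have s: "(\<Sum>i<d. c i * ?x i) = c j" for c :: "nat \<Rightarrow> 'q"
    proof -
      have "(\<Sum>i<d. c i * ?x i) = (\<Sum>i<d. if i = j then c i else 0)"
        by (rule sum.cong) auto
      thus ?thesis using True by simp
    qed
    have "?x \<in> hyp d a b" using True by (auto simp: hyp_def vecs_def s)
    hence "?x \<in> hyp d a' b'" using eq by simp
    hence "a j + b = a' j + b'" using True by (auto simp: hyp_def s)
    thus ?thesis using \<open>b = b'\<close> by simp
  next
    case False thus ?thesis using a a' by (auto simp: vecs_def)
  qed
qed

lemma sigma_eq:
  fixes a :: "nat \<Rightarrow> 'q::field"
  assumes "a \<in> vecs d"
  shows "sigma d (hyp d a b) = a"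
  unfolding sigma_def
  apply (rule the_equality)
  using assms hyp_unique by blast+

lemma proj_vecs: "proj d w \<in> vecs d"
  by (auto simp: proj_def vecs_def)

lemma iota_prop:
  fixes a :: "nat \<Rightarrow> 'q::field"
  assumes y: "y \<in> vecs d"
  shows "iota d (hyp d a b) y \<in> hyp d a b \<and> proj d (iota d (hyp d a b) y) = y"
proof -
  let ?w = "y(d := (\<Sum>i<d. a i * y i) + b)"
  have s: "(\<Sum>i<d. a i * ?w i) = (\<Sum>i<d. a i * y i)"
    by (rule sum.cong) auto
  have ex: "?w \<in> hyp d a b \<and> proj d ?w = y"
    using y by (auto simp: hyp_def vecs_def proj_def s)
  have un: "w = ?w" if "w \<in> hyp d a b" "proj d w = y" for w
  proof
    fix i
    have wi: "\<And>i. i < d \<Longrightarrow> w i = y i" using that(2)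
      by (metis proj_def)
    have s2: "(\<Sum>i<d. a i * w i) = (\<Sum>i<d. a i * y i)"
      by (rule sum.cong) (auto simp: wi)
    show "w i = ?w i"
    proof -
      consider "i < d" | "i = d" | "i > d" by linarith
      thus ?thesis
      proof cases
        case 1 thus ?thesis using wi by simp
      next
        case 2 thus ?thesis using that(1) s2 by (auto simp: hyp_def)
      next
        case 3 thus ?thesis using that(1) y by (auto simp: hyp_def vecs_def)
      qed
    qed
  qed
  show ?thesis unfolding iota_def
    apply (rule theI2[of _ ?w])
    using ex un by blast+
qed

lemma iota_proj:
  fixes a :: "nat \<Rightarrow> 'q::field"
  assumes w: "w \<in> hyp d a b"
  shows "iota d (hyp d a b) (proj d w) = w"
  unfolding iota_def
proof (rule the_equality)
  show "w \<in> hyp d a b \<and> proj d w = proj d w" using w by simp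
next
  fix w' assume h: "w' \<in> hyp d a b \<and> proj d w' = proj d w"
  have wi: "\<And>i. i < d \<Longrightarrow> w' i = w i" using h
    by (metis proj_def)
  have s2: "(\<Sum>i<d. a i * w' i) = (\<Sum>i<d. a i * w i)"
    by (rule sum.cong) (auto simp: wi)
  show "w' = w"
  proof
    fix i
    consider "i < d" | "i = d" | "i > d" by linarith
    thus "w' i = w i"
    proof cases
      case 1 thus ?thesis using wi by simp
    next
      case 2 thus ?thesis using h w s2 by (auto simp: hyp_def)
    next
      case 3 thus ?thesis using h w by (auto simp: hyp_def vecs_def)
    qed
  qed
qed

lemma preimage_bij:
  assumes "bij_betw f \<Omega> B" "S \<subseteq> B"
  shows "f ` {c\<in>\<Omega>. f c \<in> S} = S" "card {c\<in>\<Omega>. f c \<in> S} = card S"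
proof -
  show 1: "f ` {c\<in>\<Omega>. f c \<in> S} = S" using assms unfolding bij_betw_def by blast
  have "inj_on f {c\<in>\<Omega>. f c \<in> S}" using assms unfolding bij_betw_def
    by (auto intro: inj_on_subset)
  thus "card {c\<in>\<Omega>. f c \<in> S} = card S" using card_image 1 by metis
qed

theorem mainTheorem10:
  fixes \<Omega> :: "'c set" and m d :: nat and tau :: "nat \<Rightarrow> nat"
    and f :: "'c \<Rightarrow> nat \<Rightarrow> 'q::{finite,field}"
    and X :: "nat \<Rightarrow> (nat \<Rightarrow> 'q) set"
    and V :: "(nat \<Rightarrow> 'q) set"
  assumes suit: "suitable m (card (UNIV :: 'q set)) d tau"
    and deck: "finite \<Omega>" "card \<Omega> = (\<Sum>P\<le>m. tau P)"
    and fbij: "bij_betw f \<Omega> (vecs (Suc d))"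
    and Xsub: "\<forall>k\<in>{1..m}. X k \<subseteq> vecs d"
    and Xdisj: "\<forall>k\<in>{1..m}. \<forall>l\<in>{1..m}. k \<noteq> l \<longrightarrow> X k \<inter> X l = {}"
    and Xcover: "(\<Union>k\<in>{1..m}. X k) = vecs d"
    and Xcard: "\<forall>k\<in>{1..m}. card (X k) = tau k"
    and V: "transversal d V"
  shows "is_deal \<Omega> m tau (N \<Omega> d V f X) \<and>
         is_execution \<Omega> m d tau (N \<Omega> d V f X) (TokF f # map (\<lambda>k. TokX (X k)) [1..<Suc m])"
proof -
  obtain a b where a: "a \<in> vecs d" and Vh: "V = hyp d a b"
    using V unfolding transversal_def by blast
  have sig: "sigma d V = a" using sigma_eq[OF a] Vh by simp
  let ?g = "pi_up d V"
  have Vsub: "V \<subseteq> vecs (Suc d)" using Vh hyp_sub by blast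
  have sub_vec: "(\<lambda>i. y i - a i) \<in> vecs d" if "y \<in> vecs d" for y
    using that a by (auto simp: vecs_def)
  have G1: "?g y \<in> V \<and> pi_down d V (?g y) = y" if y: "y \<in> vecs d" for y
  proof -
    have "(\<lambda>i. y i - sigma d V i) = (\<lambda>i. y i - a i)" using sig by auto
    hence gy: "?g y = iota d V ((\<lambda>i. y i - a i))" by (simp add: pi_up_def)
    have ip: "iota d V ((\<lambda>i. y i - a i)) \<in> V \<and> proj d (iota d V ((\<lambda>i. y i - a i))) = (\<lambda>i. y i - a i)"
      using iota_prop[OF sub_vec[OF y]] Vh by simp
    show ?thesis using ip gy sig by (auto simp: pi_down_def)
  qed
  have G2: "inj_on ?g (vecs d)" by (rule inj_on_inverseI[where g="pi_down d V"]) (use G1 in blast)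
  have G3: "?g ` vecs d = V"
  proof
    show "?g ` vecs d \<subseteq> V" using G1 by blast
    show "V \<subseteq> ?g ` vecs d"
    proof
      fix w assume w: "w \<in> V"
      have pv: "(\<lambda>i. proj d w i + a i) \<in> vecs d" using a proj_vecs[of d w] by (auto simp: vecs_def)
      have "(\<lambda>i. (proj d w i + a i) - sigma d V i) = proj d w" using sig by auto
      hence "?g ((\<lambda>i. proj d w i + a i)) = w" using iota_proj[of w d a b] w Vh by (simp add: pi_up_def)
      thus "w \<in> ?g ` vecs d" using pv by force
    qed
  qed
  have finvec: "finite (vecs (Suc d) :: (nat \<Rightarrow> 'q) set)" using iffD1[OF bij_betw_finite[OF fbij] deck(1)] .
  have vsub: "(vecs d :: (nat \<Rightarrow> 'q) set) \<subseteq> vecs (Suc d)" by (auto simp: vecs_def)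
  have finvd: "finite (vecs d :: (nat \<Rightarrow> 'q) set)" using finite_subset[OF vsub finvec] .
  have finV: "finite V" using finite_subset[OF Vsub finvec] .
  let ?H = "N \<Omega> d V f X"
  have H0: "?H 0 = {c\<in>\<Omega>. f c \<in> vecs (Suc d) - V}" by (simp add: N_def)
  have Hk: "?H k = {c\<in>\<Omega>. f c \<in> ?g ` X k}" if "k \<noteq> 0" for k using that by (simp add: N_def)
  have gXsub: "?g ` X k \<subseteq> V" if "k \<in> {1..m}" for k using G1 Xsub that by blast
  have fH0: "f ` ?H 0 = vecs (Suc d) - V" using preimage_bij(1)[OF fbij, of "vecs (Suc d) - V"] H0 by simp
  have fHk: "f ` ?H k = ?g ` X k" if "k \<in> {1..m}" for k
    using preimage_bij(1)[OF fbij, of "?g ` X k"] Hk[of k] that gXsub[OF that] Vsub by auto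
  have cardVd: "card (vecs d :: (nat \<Rightarrow> 'q) set) = (\<Sum>k\<in>{1..m}. tau k)"
  proof -
    have "card (vecs d :: (nat \<Rightarrow> 'q) set) = card (\<Union>k\<in>{1..m}. X k)" using Xcover by simp
    also have "\<dots> = (\<Sum>k\<in>{1..m}. card (X k))"
      apply (rule card_UN_disjoint)
      using Xsub finvd Xdisj by (auto intro: finite_subset)
    also have "\<dots> = (\<Sum>k\<in>{1..m}. tau k)" using Xcard by simp
    finally show ?thesis .
  qed
  have cardV: "card V = card (vecs d :: (nat \<Rightarrow> 'q) set)" using card_image[OF G2] G3 by simp
  have cardO: "card (vecs (Suc d) :: (nat \<Rightarrow> 'q) set) = card \<Omega>" using fbij bij_betw_same_card by metis
  have sumsplit: "(\<Sum>P\<le>m. tau P) = tau 0 + (\<Sum>k\<in>{1..m}. tau k)"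
  proof -
    have "{..m} = insert 0 {1..m}" by auto
    thus ?thesis by simp
  qed
  have card0: "card (?H 0) = tau 0"
  proof -
    have "card (?H 0) = card (vecs (Suc d) - V)"
      using preimage_bij(2)[OF fbij, of "vecs (Suc d) - V"] H0 by simp
    also have "\<dots> = card (vecs (Suc d) :: (nat \<Rightarrow> 'q) set) - card V" using card_Diff_subset[OF finV Vsub] by simp
    finally show ?thesis using cardO deck(2) sumsplit cardV cardVd by simp
  qed
  have cardk: "card (?H k) = tau k" if k: "k \<in> {1..m}" for k
  proof -
    have "card (?H k) = card (?g ` X k)"
      using preimage_bij(2)[OF fbij, of "?g ` X k"] Hk[of k] k gXsub[OF k] Vsub by auto
    also have "\<dots> = card (X k)" using card_image inj_on_subset[OF G2] Xsub k by metis
    finally show ?thesis using Xcard k by simp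
  qed
  have deal: "is_deal \<Omega> m tau ?H"
    unfolding is_deal_def
  proof (intro conjI allI impI)
    fix P assume P: "P \<le> m"
    show "?H P \<subseteq> \<Omega>" by (auto simp: N_def)
    thus "finite (?H P)" using deck(1) finite_subset by blast
    show "card (?H P) = tau P"
      using P card0 cardk by (cases "P = 0") auto
  next
    fix P Q assume P: "P \<le> m" and Q: "Q \<le> m" and PQ: "P \<noteq> Q"
    show "?H P \<inter> ?H Q = {}"
    proof (cases "P = 0 \<or> Q = 0")
      case True
      have d0: "?H 0 \<inter> ?H k = {}" if k: "k \<in> {1..m}" for k
      proof -
        have "k \<noteq> 0" using k by simp
        thus ?thesis using H0 Hk[of k] gXsub[OF k] by blast
      qed
      show ?thesis
      proof (cases "P = 0")
        case True thus ?thesis using d0[of Q] PQ Q by auto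
      next
        case False thus ?thesis using d0[of P] \<open>P = 0 \<or> Q = 0\<close> P by auto
      qed
    next
      case False
      hence Pk: "P \<in> {1..m}" and Qk: "Q \<in> {1..m}" using P Q by auto
      have "?g ` X P \<inter> ?g ` X Q = {}"
      proof -
        have "?g ` X P \<inter> ?g ` X Q = ?g ` (X P \<inter> X Q)"
          using inj_on_image_Int[OF G2] Xsub Pk Qk by blast
        thus ?thesis using Xdisj Pk Qk PQ by auto
      qed
      thus ?thesis using Hk False by auto
    qed
  next
    show "(\<Union>P\<in>{..m}. ?H P) = \<Omega>"
    proof
      show "(\<Union>P\<in>{..m}. ?H P) \<subseteq> \<Omega>" by (auto simp: N_def)
      show "\<Omega> \<subseteq> (\<Union>P\<in>{..m}. ?H P)"
      proof
        fix c assume c: "c \<in> \<Omega>"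
        have fc: "f c \<in> vecs (Suc d)" using fbij c bij_betw_apply by metis
        show "c \<in> (\<Union>P\<in>{..m}. ?H P)"
        proof (cases "f c \<in> V")
          case False thus ?thesis using c fc H0 by auto
        next
          case True
          then obtain y where y: "y \<in> vecs d" "f c = ?g y" using G3 by auto
          have "y \<in> (\<Union>k\<in>{1..m}. X k)" using Xcover y(1) by simp
          then obtain k where k: "k \<in> {1..m}" "y \<in> X k" by blast
          have "c \<in> ?H k" using Hk[of k] k y c by auto
          thus ?thesis using k by auto
        qed
      qed
    qed
  qed
  let ?toks = "TokF f # map (\<lambda>k. TokX (X k)) [1..<Suc m]"
  have mx: "max_exec \<Omega> m d tau ?H ?toks"
    unfolding max_exec_def
  proof (intro conjI exI)
    show "is_deal \<Omega> m tau ?H" by (rule deal)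
    show "?toks = TokF f # map (\<lambda>k. TokX (X k)) [1..<Suc m]" by simp
    show "bij_betw f \<Omega> (vecs (Suc d))" by (rule fbij)
    have eqV: "vecs (Suc d) - f ` ?H 0 = V" using fH0 Vsub by auto
    show "transversal d (vecs (Suc d) - f ` ?H 0)" using eqV V by simp
    show "\<forall>k\<in>{1..m}. X k = pi_down d (vecs (Suc d) - f ` ?H 0) ` f ` ?H k"
    proof
      fix k assume k: "k \<in> {1..m}"
      have "pi_down d V ` ?g ` X k = X k"
      proof -
        have "pi_down d V ` ?g ` X k = (\<lambda>y. pi_down d V (?g y)) ` X k" by (simp add: image_image)
        also have "\<dots> = (\<lambda>y. y) ` X k"
          proof (rule image_cong)
          fix y assume "y \<in> X k"
          hence "y \<in> vecs d" using Xsub k by blast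
          thus "pi_down d V (?g y) = y" using G1 by blast
        qed simp
        finally show ?thesis by simp
      qed
      thus "X k = pi_down d (vecs (Suc d) - f ` ?H 0) ` f ` ?H k" using eqV fHk[OF k] by simp
    qed
  qed
  have exe: "is_execution \<Omega> m d tau ?H ?toks"
    unfolding is_execution_def Pi_tok_def
  proof (intro allI impI CollectI exI conjI)
    fix k assume k: "k < length ?toks"
    show "max_exec \<Omega> m d tau ?H ?toks" by (rule mx)
    have "take k ?toks @ [?toks ! k] = take (Suc k) ?toks"
      using k take_Suc_conv_app_nth by metis
    thus "prefix (take k ?toks @ [?toks ! k]) ?toks" by (simp add: take_is_prefix)
  qed
  show ?thesis using deal exe by simp
qed

end
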